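(* Let $d\ge 2$ and let $\mathcal D\subseteq\mathbb S_1^{d-1}$ have non-empty interior. Then for every $M\in G$ and $t\in(0,1)$ the set $\mathcal Q_{\mathcal D}(M,t)$ is non-empty and the minimum defining $F_{\mathcal D}(M,t)$ exists and is positive; moreover $F_{\mathcal D}(\gamma M,t)=F_{\mathcal D}(M,t)$ for all $\gamma\in\Gamma$. Hence $F_{\mathcal D}$ is a well-defined function $\Gamma\backslash G\times(0,1)\to\mathbb R_{>0}$.
   Context: $G=\mathrm{SL}(d+1,\mathbb R)$, $\Gamma=\mathrm{SL}(d+1,\mathbb Z)$. Elements of $\mathbb R^{d+1}$ are row vectors $(u,\vec v)$, $u\in\mathbb R$, $\vec v\in\mathbb R^d$; $\mathbb Z^{d+1}M=\{\vec mM:\vec m\in\mathbb Z^{d+1}\}$. For $t\in(0,1)$, $\mathcal Q_{\mathcal D}(M,t)=\{(u,\vec v)\in\mathbb Z^{d+1}M : -t<u<1-t,\ \vec v\in\mathbb R_{>0}\mathcal D\}$ and $F_{\mathcal D}(M,t)=\min\{|\vec v| : (u,\vec v)\in\mathcal Q_{\mathcal D}(M,t)\}$ (Euclidean norm). *)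

theory Defs
  imports "HOL-Analysis.Analysis"
begin

text \<open>Vectors of R^(d+1) are indexed by 'n option, where CARD('n) = d:
  coordinate None is u, coordinates Some i form the vector v in R^d.\<close>

definition upart :: "real ^ ('n::finite option) \<Rightarrow> real" where
  "upart w = w $ None"

definition vpart :: "real ^ ('n::finite option) \<Rightarrow> real ^ 'n" where
  "vpart w = (\<chi> i. w $ Some i)"

definition int_vec :: "real ^ 'm::finite \<Rightarrow> bool" where
  "int_vec m \<longleftrightarrow> (\<forall>i. m $ i \<in> \<int>)"

definition int_mat :: "real ^ 'm::finite ^ 'm \<Rightarrow> bool" where
  "int_mat A \<longleftrightarrow> (\<forall>i j. A $ i $ j \<in> \<int>)"

definition lattice :: "real ^ 'm::finite ^ 'm \<Rightarrow> (real ^ 'm) set" where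
  "lattice M = {m v* M | m. int_vec m}"

definition Qset :: "(real ^ 'n) set \<Rightarrow> real ^ ('n::finite option) ^ ('n option) \<Rightarrow> real
    \<Rightarrow> (real ^ ('n option)) set" where
  "Qset D M t = {w \<in> lattice M. - t < upart w \<and> upart w < 1 - t \<and>
       vpart w \<in> {c *\<^sub>R x | c x. c > 0 \<and> x \<in> D}}"

definition Ffun :: "(real ^ 'n) set \<Rightarrow> real ^ ('n::finite option) ^ ('n option) \<Rightarrow> real \<Rightarrow> real" where
  "Ffun D M t = Inf ((\<lambda>w. norm (vpart w)) ` Qset D M t)"

end

theory Submission
  imports Defs
begin


lemma det_int: fixes A :: "real^'m::finite^'m" assumes "int_mat A" shows "det A \<in> \<int>"
  using assms unfolding det_def int_mat_def
  by (intro Ints_sum Ints_mult Ints_prod) auto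

lemma int_mat_inv:
  fixes g :: "real^'m::finite^'m"
  assumes "det g = 1" "int_mat g" "int_vec y"
  shows "\<exists>x. int_vec x \<and> x v* g = y"
proof -
  let ?x = "(\<chi> k. det(\<chi> i j. if j=k then y$i else (transpose g)$i$j) / det (transpose g)) :: real^'m"
  have "transpose g *v ?x = y"
    using cramer[of "transpose g" ?x y] assms by simp
  hence "?x v* g = y" by simp
  moreover have "int_vec ?x"
    unfolding int_vec_def det_transpose using assms
    by (auto intro!: det_int simp: int_mat_def int_vec_def transpose_def)
  ultimately show ?thesis by blast
qed

lemma lattice_mult:
  fixes g M :: "real^'m::finite^'m"
  assumes "det g = 1" "int_mat g"
  shows "lattice (g ** M) = lattice M"
proof
  show "lattice (g ** M) \<subseteq> lattice M"
  proof
    fix w assume "w \<in> lattice (g ** M)"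
    then obtain m where m: "int_vec m" "w = m v* (g ** M)" unfolding lattice_def by auto
    have "w = (m v* g) v* M" using m by (simp add: vector_matrix_mul_assoc)
    moreover have "int_vec (m v* g)" using m(1) assms(2)
      unfolding int_vec_def int_mat_def vector_matrix_mult_def
      by (auto intro!: Ints_sum Ints_mult)
    ultimately show "w \<in> lattice M" unfolding lattice_def by blast
  qed
next
  show "lattice M \<subseteq> lattice (g ** M)"
  proof
    fix w assume "w \<in> lattice M"
    then obtain m where m: "int_vec m" "w = m v* M" unfolding lattice_def by auto
    obtain x where x: "int_vec x" "x v* g = m" using int_mat_inv[OF assms m(1)] by blast
    have "w = x v* (g ** M)" using m x by (simp add: vector_matrix_mul_assoc[symmetric])
    then show "w \<in> lattice (g ** M)" using x(1) unfolding lattice_def by blast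
  qed
qed

lemma inv_bound:
  fixes M :: "real^'m::finite^'m"
  assumes "det M \<noteq> 0"
  obtains B where "B > 0" "\<And>m. norm m \<le> B * norm (m v* M)"
proof -
  obtain N where N: "M ** N = mat 1" using assms unfolding invertible_det_nz[symmetric] invertible_def by blast
  have lin: "linear (\<lambda>x. x v* N)"
    using matrix_vector_mul_linear[of "transpose N"] by simp
  obtain B where B: "B > 0" "\<And>x. norm (x v* N) \<le> B * norm x"
    using linear_bounded_pos[OF lin] by blast
  have "norm m \<le> B * norm (m v* M)" for m
  proof -
    have "(m v* M) v* N = m" by (simp add: vector_matrix_mul_assoc N)
    then show ?thesis using B(2)[of "m v* M"] by simp
  qed
  then show ?thesis using B(1) that by blast
qed

lemma int_vec_norm: assumes "int_vec (m::real^'m::finite)" "m \<noteq> 0" shows "1 \<le> norm m"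
proof -
  obtain i where i: "m $ i \<noteq> 0" using assms(2) by (metis vec_eq_iff zero_index)
  have "m $ i \<in> \<int>" using assms(1) unfolding int_vec_def by blast
  then obtain z where z: "m $ i = of_int z" by (auto elim: Ints_cases)
  have "z \<noteq> 0" using i z by auto
  hence "1 \<le> \<bar>z\<bar>" by linarith
  hence "1 \<le> \<bar>m $ i\<bar>" using z by (metis of_int_1_le_iff of_int_abs)
  also have "\<dots> \<le> norm m" by (rule component_le_norm_cart)
  finally show ?thesis .
qed

lemma min_norm:
  fixes M :: "real^'m::finite^'m"
  assumes "det M \<noteq> 0"
  obtains mu where "mu > 0" "\<And>m. int_vec m \<Longrightarrow> m \<noteq> 0 \<Longrightarrow> mu \<le> norm (m v* M)"
proof -
  obtain B where B: "B > 0" "\<And>m. norm m \<le> B * norm (m v* M)" using inv_bound[OF assms] by blast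
  have *: "1 / B \<le> norm (m v* M)" if "int_vec m" "m \<noteq> 0" for m
    using int_vec_norm[OF that] B(2)[of m] B(1) by (simp add: field_simps)
  show ?thesis by (rule that[of "1/B"]) (simp_all add: B(1) *)
qed

lemma finite_int_ball: "finite {m :: real^'m::finite. int_vec m \<and> norm m \<le> R}"
proof -
  let ?K = "\<lceil>R\<rceil>"
  have "{m :: real^'m. int_vec m \<and> norm m \<le> R} \<subseteq>
        (\<lambda>f. \<chi> i. of_int (f i)) ` (PiE UNIV (\<lambda>_. {-?K..?K}))"
  proof
    fix m :: "real^'m" assume m: "m \<in> {m. int_vec m \<and> norm m \<le> R}"
    define f where "f i = \<lfloor>m $ i\<rfloor>" for i
    have e: "of_int (f i) = m $ i" for i
      using m unfolding int_vec_def f_def by auto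
    have "\<bar>m $ i\<bar> \<le> R" for i using m component_le_norm_cart[of m i] by auto
    hence "f \<in> PiE UNIV (\<lambda>_. {-?K..?K})" unfolding f_def
    proof (auto simp: PiE_def)
      fix i
      have a: "\<bar>m $ i\<bar> \<le> R" by fact
      show "- \<lceil>R\<rceil> \<le> \<lfloor>m $ i\<rfloor>" using a by linarith
      show "\<lfloor>m $ i\<rfloor> \<le> \<lceil>R\<rceil>" using a by linarith
    qed
    moreover have "m = (\<chi> i. of_int (f i))" using e by (simp add: vec_eq_iff)
    ultimately show "m \<in> (\<lambda>f. \<chi> i. of_int (f i)) ` (PiE UNIV (\<lambda>_. {-?K..?K}))" by blast
  qed
  moreover have "finite (PiE (UNIV::'m set) (\<lambda>_. {-?K..?K}))" by (intro finite_PiE) auto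
  ultimately show ?thesis using finite_subset by blast
qed

lemma finite_lattice_ball:
  fixes M :: "real^'m::finite^'m"
  assumes "det M \<noteq> 0"
  shows "finite {w \<in> lattice M. norm w \<le> R}"
proof -
  obtain B where B: "B > 0" "\<And>m. norm m \<le> B * norm (m v* M)" using inv_bound[OF assms] by blast
  have "{w \<in> lattice M. norm w \<le> R} \<subseteq> (\<lambda>m. m v* M) ` {m. int_vec m \<and> norm m \<le> B * R}"
  proof
    fix w assume "w \<in> {w \<in> lattice M. norm w \<le> R}"
    then obtain m where m: "int_vec m" "w = m v* M" "norm w \<le> R" unfolding lattice_def by auto
    have "norm m \<le> B * R" using B(2)[of m] m B(1) by (smt (verit) mult_left_mono)
    then show "w \<in> (\<lambda>m. m v* M) ` {m. int_vec m \<and> norm m \<le> B * R}" using m by blast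
  qed
  then show ?thesis using finite_int_ball finite_subset by blast
qed

lemma norm_uv: "norm (w::real^('n::finite option)) \<le> \<bar>upart w\<bar> + norm (vpart w)"
proof -
  have U: "(UNIV :: 'n option set) = insert None (Some ` UNIV)" by (metis UNIV_option_conv)
  have "(norm w)^2 = (upart w)^2 + (norm (vpart w))^2"
    unfolding power2_norm_eq_inner inner_vec_def upart_def vpart_def
    by (subst U, simp add: sum.reindex power2_eq_square)
  hence "(norm w)^2 \<le> (\<bar>upart w\<bar> + norm (vpart w))^2"
    by (simp add: power2_eq_square algebra_simps)
  then show ?thesis by (rule power2_le_imp_le) simp
qed

lemma floor_eq_close:
  fixes a b e :: real assumes "e > 0" "\<lfloor>a / e\<rfloor> = \<lfloor>b / e\<rfloor>"
  shows "\<bar>a - b\<bar> < e"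
proof -
  have "\<bar>a / e - b / e\<bar> < 1" using assms(2) by linarith
  hence "\<bar>(a - b) / e\<bar> < 1" by (simp add: diff_divide_distrib)
  thus ?thesis using assms(1) by (simp add: abs_divide)
qed

lemma floor_bound: fixes x y :: real assumes "\<bar>x\<bar> \<le> y"
  shows "- \<lceil>y\<rceil> - 1 \<le> \<lfloor>x\<rfloor> \<and> \<lfloor>x\<rfloor> \<le> \<lceil>y\<rceil> + 1"
proof -
  have "- y \<le> x" "x \<le> y" using assms by auto
  hence "\<lfloor>- y\<rfloor> \<le> \<lfloor>x\<rfloor>" "\<lfloor>x\<rfloor> \<le> \<lfloor>y\<rfloor>"
    by (simp_all add: floor_mono)
  moreover have "\<lfloor>y\<rfloor> \<le> \<lceil>y\<rceil>" by (rule floor_le_ceiling)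
  moreover have "\<lfloor>- y\<rfloor> = - \<lceil>y\<rceil>" by (simp add: ceiling_def)
  ultimately show ?thesis by linarith
qed

lemma pigeon:
  fixes F :: "real^'m::finite \<Rightarrow> real^'k::finite"
  assumes lin: "linear F" and card: "CARD('k) < CARD('m)" and eps: "e > 0"
  shows "\<exists>m. int_vec m \<and> m \<noteq> 0 \<and> (\<forall>i. \<bar>F m $ i\<bar> < e)"
proof -
  obtain B where B: "B > 0" "\<And>x. norm (F x) \<le> B * norm x"
    using linear_bounded_pos[OF lin] by blast
  define n where "n = CARD('m)"
  define k where "k = CARD('k)"
  define C where "C = 2 * B * n / e + 5"
  define N :: nat where "N = nat \<lceil>C ^ k\<rceil> + 1"
  define L :: int where "L = \<lceil>B * n * N / e\<rceil> + 1"
  define vecf :: "('m \<Rightarrow> nat) \<Rightarrow> real^'m" where "vecf f = (\<chi> j. real (f j))" for f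
  define A where "A = PiE (UNIV::'m set) (\<lambda>_. {0..N})"
  define Bs where "Bs = PiE (UNIV::'k set) (\<lambda>_. {-L..L})"
  define cell where "cell f = (\<lambda>i. \<lfloor>F (vecf f) $ i / e\<rfloor>)" for f
  have "2 * B * n / e \<ge> 0" using B eps by simp
  hence C0: "C > 0" unfolding C_def by linarith
  have N1: "N \<ge> 1" unfolding N_def by simp
  have NC: "real N > C ^ k" unfolding N_def by linarith
  have sub: "cell ` A \<subseteq> Bs"
  proof
    fix c assume "c \<in> cell ` A"
    then obtain f where f: "f \<in> A" "c = cell f" by blast
    have fN: "f j \<le> N" for j using f(1) unfolding A_def by auto
    have "norm (vecf f) \<le> (\<Sum>j\<in>UNIV. \<bar>vecf f $ j\<bar>)" by (rule norm_le_l1_cart)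
    also have "\<dots> \<le> (\<Sum>j\<in>(UNIV::'m set). real N)"
      by (intro sum_mono) (simp add: vecf_def fN)
    also have "\<dots> = n * N" unfolding n_def by simp
    finally have nv: "norm (vecf f) \<le> n * N" .
    have bnd: "\<bar>F (vecf f) $ i / e\<bar> \<le> B * n * N / e" for i
    proof -
      have "\<bar>F (vecf f) $ i\<bar> \<le> norm (F (vecf f))" by (rule component_le_norm_cart)
      also have "\<dots> \<le> B * norm (vecf f)" by (rule B(2))
      also have "\<dots> \<le> B * (n * N)" using nv B(1) by (simp add: mult_left_mono)
      finally show ?thesis using eps by (simp add: abs_divide divide_right_mono)
    qed
    have "c i \<in> {-L..L}" for i
    proof -
      have "c i = \<lfloor>F (vecf f) $ i / e\<rfloor>" using f(2) unfolding cell_def by simp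
      moreover have "\<lceil>B * n * N / e\<rceil> \<ge> B * n * N / e" by (rule le_of_int_ceiling)
      ultimately show ?thesis using floor_bound[OF bnd[of i]] unfolding L_def by simp
    qed
    thus "c \<in> Bs" unfolding Bs_def by auto
  qed
  have cardA: "card A = (N + 1) ^ n" unfolding A_def n_def by (simp add: card_PiE)
  have cardB: "card Bs = nat (2 * L + 1) ^ k" unfolding Bs_def k_def by (simp add: card_PiE)
  have "B * n * N / e \<ge> 0" using B eps by simp
  hence "\<lceil>B * n * N / e\<rceil> \<ge> 0" by (simp add: zero_le_ceiling)
  hence L0: "L \<ge> 0" unfolding L_def by simp
  have "real (card Bs) < real (card A)"
  proof -
    have c: "real_of_int \<lceil>B * n * N / e\<rceil> < B * n * N / e + 1" by linarith
    have "real_of_int (2 * L + 1) = 2 * real_of_int \<lceil>B * n * N / e\<rceil> + 3" unfolding L_def by (simp only: of_int_add of_int_mult) simp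
    also have "\<dots> \<le> 2 * (B * n * N / e) + 5" using c by linarith
    also have "\<dots> = 2 * B * n * N / e + 5" by (simp only: times_divide_eq_right mult.assoc)
    also have "\<dots> \<le> C * N" unfolding C_def using N1 by (simp add: field_simps)
    finally have l1: "real_of_int (2 * L + 1) \<le> C * N" .
    have "real (card Bs) = (real_of_int (2 * L + 1)) ^ k" unfolding cardB using L0 by simp
    also have "\<dots> \<le> (C * N) ^ k" using l1 L0 by (intro power_mono) auto
    also have "\<dots> = C ^ k * real N ^ k" by (simp add: power_mult_distrib)
    also have "\<dots> < real N * real N ^ k" using NC N1 by (intro mult_strict_right_mono) auto
    also have "\<dots> = real N ^ (k + 1)" by simp
    also have "\<dots> \<le> real N ^ n" using N1 card unfolding n_def k_def by (intro power_increasing) auto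
    also have "\<dots> < (real N + 1) ^ n" using card unfolding n_def by (intro power_strict_mono) auto
    also have "\<dots> = real (card A)" unfolding cardA by (simp add: add.commute)
    finally show ?thesis .
  qed
  hence "card Bs < card A" by linarith
  hence "\<not> inj_on cell A"
    using card_inj_on_le[OF _ sub] unfolding Bs_def by (metis finite_PiE finite_atLeastAtMost_int finite not_le)
  then obtain f g where fg: "f \<in> A" "g \<in> A" "f \<noteq> g" "cell f = cell g"
    unfolding inj_on_def by blast
  define m where "m = vecf f - vecf g"
  have "int_vec m" unfolding int_vec_def m_def vecf_def by simp
  moreover have "m \<noteq> 0"
  proof
    assume "m = 0"
    hence "f j = g j" for j unfolding m_def vecf_def by (metis eq_iff_diff_eq_0 of_nat_eq_iff vec_lambda_beta)
    thus False using fg(3) by auto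
  qed
  moreover have "\<bar>F m $ i\<bar> < e" for i
  proof -
    have "\<lfloor>F (vecf f) $ i / e\<rfloor> = \<lfloor>F (vecf g) $ i / e\<rfloor>" using fg(4) unfolding cell_def by metis
    hence "\<bar>F (vecf f) $ i - F (vecf g) $ i\<bar> < e" by (rule floor_eq_close[OF eps])
    moreover have "F m = F (vecf f) - F (vecf g)" unfolding m_def by (rule linear_diff[OF lin])
    ultimately show ?thesis by simp
  qed
  ultimately show ?thesis by blast
qed



lemma direction:
  fixes v x0 :: "'a::real_normed_vector"
  assumes "norm x0 = 1" "s > 0" "dl > 0" "dl \<le> 1" "norm (v - s *\<^sub>R x0) < s * dl / 2"
  shows "v \<noteq> 0 \<and> norm ((1 / norm v) *\<^sub>R v - x0) < dl"
proof -
  define e where "e = norm (v - s *\<^sub>R x0)"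
  have nsx: "norm (s *\<^sub>R x0) = s" using assms(1,2) by simp
  have r1: "\<bar>norm v - s\<bar> \<le> e" unfolding e_def using norm_triangle_ineq3[of v "s *\<^sub>R x0"] nsx by simp
  have es: "e < s / 2" using assms(2-5) unfolding e_def
    by (smt (verit, best) divide_right_mono mult_left_le)
  hence nv: "norm v > s / 2" using r1 by linarith
  hence v0: "v \<noteq> 0" using assms(2) by auto
  have "norm ((1 / norm v) *\<^sub>R v - x0) \<le> norm ((1 / norm v) *\<^sub>R v - (1 / s) *\<^sub>R v) + norm ((1/s) *\<^sub>R v - x0)"
    using norm_triangle_ineq[of "(1 / norm v) *\<^sub>R v - (1 / s) *\<^sub>R v" "(1/s) *\<^sub>R v - x0"] by simp
  also have "norm ((1 / norm v) *\<^sub>R v - (1 / s) *\<^sub>R v) = \<bar>norm v - s\<bar> / s"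
  proof -
    have "(1 / norm v) *\<^sub>R v - (1 / s) *\<^sub>R v = (1 / norm v - 1 / s) *\<^sub>R v" by (simp add: scaleR_diff_left)
    hence "norm ((1 / norm v) *\<^sub>R v - (1 / s) *\<^sub>R v) = \<bar>1 / norm v - 1 / s\<bar> * norm v" by simp
    also have "\<dots> = \<bar>norm v - s\<bar> / s"
    proof -
      have r0: "norm v > 0" using v0 by simp
      have eq: "1 / norm v - 1 / s = (s - norm v) / (norm v * s)" using r0 assms(2) by (simp add: field_simps)
      have "\<bar>norm v * s\<bar> = norm v * s" using r0 assms(2) by simp
      hence "\<bar>1 / norm v - 1 / s\<bar> = \<bar>s - norm v\<bar> / (norm v * s)" unfolding eq abs_divide by simp
      thus ?thesis using r0 assms(2) by (simp add: abs_minus_commute)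
    qed
    finally show ?thesis .
  qed
  also have "norm ((1/s) *\<^sub>R v - x0) = e / s"
  proof -
    have "(1/s) *\<^sub>R v - x0 = (1/s) *\<^sub>R (v - s *\<^sub>R x0)" using assms(2) by (simp add: scaleR_diff_right)
    thus ?thesis unfolding e_def using assms(2) by simp
  qed
  also have "\<bar>norm v - s\<bar> / s + e / s \<le> 2 * e / s" using r1 assms(2) by (simp add: field_simps)
  also have "2 * e / s < dl" using assms(2,5) unfolding e_def by (simp add: field_simps)
  finally show ?thesis using v0 by simp
qed

lemma upart_neg: "upart (- w) = - upart w" unfolding upart_def by simp
lemma vpart_neg: "vpart (- w) = - vpart w" unfolding vpart_def by (simp add: vec_eq_iff)

lemma good_in_Q:
  fixes M :: "real^('n::finite option)^('n option)" and x0 :: "real^'n"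
  assumes w: "w \<in> lattice M" and u: "\<bar>upart w\<bar> < min t (1 - t)"
    and x0: "norm x0 = 1" and s: "s > 0" and dl: "dl > 0" "dl \<le> 1"
    and vD: "\<forall>y\<in>sphere 0 1. dist y x0 < dl \<longrightarrow> y \<in> D"
    and close: "norm (vpart w - s *\<^sub>R x0) < s * dl / 2"
  shows "w \<in> Qset D M t"
proof -
  have dir: "vpart w \<noteq> 0 \<and> norm ((1 / norm (vpart w)) *\<^sub>R vpart w - x0) < dl"
    by (rule direction[OF x0 s dl close])
  define x where "x = (1 / norm (vpart w)) *\<^sub>R vpart w"
  have "norm x = 1" unfolding x_def using dir by simp
  moreover have "dist x x0 < dl" unfolding x_def dist_norm using dir by simp
  ultimately have "x \<in> D" using vD by simp
  moreover have "vpart w = norm (vpart w) *\<^sub>R x" unfolding x_def using dir by simp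
  moreover have "norm (vpart w) > 0" using dir by simp
  ultimately have "vpart w \<in> {c *\<^sub>R x | c x. c > 0 \<and> x \<in> D}" by blast
  thus ?thesis unfolding Qset_def using w u by auto
qed

lemma Q_nonempty:
  fixes M :: "real^('n::finite option)^('n option)" and x0 :: "real^'n"
  assumes M: "det M \<noteq> 0" and t: "0 < t" "t < 1"
    and x0: "norm x0 = 1" and dl: "dl > 0" "dl \<le> 1"
    and vD: "\<forall>y\<in>sphere 0 1. dist y x0 < dl \<longrightarrow> y \<in> D"
  shows "Qset D M t \<noteq> {}"
proof -
  obtain mu where mu: "mu > 0" "\<And>m. int_vec m \<Longrightarrow> m \<noteq> 0 \<Longrightarrow> mu \<le> norm (m v* M)"
    using min_norm[OF M] by blast
  obtain i0 where i0: "x0 $ i0 \<noteq> 0" using x0 by (metis norm_zero vec_eq_iff zero_index zero_neq_one)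
  define d where "d = CARD('n)"
  define a where "a = min t (1 - t)"
  have a0: "a > 0" unfolding a_def using t by simp
  define e where "e = min (a / 2) (mu * dl / (8 * (d + 1)))"
  have e0: "e > 0" unfolding e_def using a0 mu dl by simp
  have ea: "e < a" unfolding e_def using a0 by simp
  have ed: "(d + 1) * e \<le> mu * dl / 8"
  proof -
    have "e \<le> mu * dl / (8 * (d + 1))" unfolding e_def by simp
    hence "(d + 1) * e \<le> (d + 1) * (mu * dl / (8 * (d + 1)))" by (rule mult_left_mono) simp
    also have "\<dots> = mu * dl / 8" by (simp add: field_simps)
    finally show ?thesis .
  qed
  define F :: "real^('n option) \<Rightarrow> real^'n" where
    "F m = (\<chi> j. if j = i0 then upart (m v* M)
              else vpart (m v* M) $ j - (vpart (m v* M) $ i0 / x0 $ i0) * x0 $ j)" for m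
  have lin: "linear F"
  proof (rule linearI)
    fix x y :: "real^('n option)"
    show "F (x + y) = F x + F y" unfolding F_def upart_def vpart_def
      by (simp add: vec_eq_iff vector_matrix_left_distrib algebra_simps add_divide_distrib)
  next
    fix c :: real and x :: "real^('n option)"
    show "F (c *\<^sub>R x) = c *\<^sub>R F x" unfolding F_def upart_def vpart_def
      by (simp add: vec_eq_iff scaleR_vector_matrix_assoc algebra_simps)
  qed
  have card: "CARD('n) < CARD('n option)" by (simp add: card_UNIV_option)
  obtain m where m: "int_vec m" "m \<noteq> 0" "\<And>i. \<bar>F m $ i\<bar> < e"
    using pigeon[OF lin card e0] by blast
  define p where "p = m v* M"
  define v where "v = vpart p"
  define s where "s = v $ i0 / x0 $ i0"
  have up: "\<bar>upart p\<bar> < e" using m(3)[of i0] unfolding F_def p_def by simp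
  have comp: "\<bar>(v - s *\<^sub>R x0) $ j\<bar> \<le> e" for j
  proof (cases "j = i0")
    case True thus ?thesis using i0 e0 unfolding s_def by simp
  next
    case False thus ?thesis using m(3)[of j] unfolding F_def s_def v_def p_def by (simp add: mult.commute)
  qed
  have nvs: "norm (v - s *\<^sub>R x0) \<le> d * e"
  proof -
    have "norm (v - s *\<^sub>R x0) \<le> (\<Sum>j\<in>UNIV. \<bar>(v - s *\<^sub>R x0) $ j\<bar>)" by (rule norm_le_l1_cart)
    also have "\<dots> \<le> (\<Sum>j\<in>(UNIV::'n set). e)" by (intro sum_mono comp)
    also have "\<dots> = d * e" unfolding d_def by simp
    finally show ?thesis .
  qed
  have "mu \<le> norm p" unfolding p_def by (rule mu(2)[OF m(1,2)])
  also have "\<dots> \<le> \<bar>upart p\<bar> + norm v" unfolding v_def by (rule norm_uv)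
  also have "norm v \<le> norm (v - s *\<^sub>R x0) + \<bar>s\<bar>"
    using norm_triangle_ineq[of "v - s *\<^sub>R x0" "s *\<^sub>R x0"] x0 by simp
  finally have "mu \<le> e + d * e + \<bar>s\<bar>" using up nvs by linarith
  hence sbig: "\<bar>s\<bar> \<ge> mu - mu * dl / 8" using ed by (simp add: algebra_simps)
  have "mu * dl / 8 \<le> mu / 8" using mu dl by simp
  hence s78: "\<bar>s\<bar> \<ge> 7 * mu / 8" using sbig by linarith
  have closeabs: "d * e < \<bar>s\<bar> * dl / 2"
  proof -
    have "d * e \<le> mu * dl / 8" using ed e0 by (simp add: algebra_simps)
    also have "\<dots> < (7 * mu / 8) * dl / 2" using mu dl by (simp add: field_simps)
    also have "\<dots> \<le> \<bar>s\<bar> * dl / 2" using s78 dl by (simp add: divide_right_mono mult_right_mono)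
    finally show ?thesis .
  qed
  have ua: "\<bar>upart p\<bar> < a" using up ea by simp
  have plat: "p \<in> lattice M" unfolding p_def lattice_def using m(1) by blast
  show ?thesis
  proof (cases "s > 0")
    case True
    have "norm (vpart p - s *\<^sub>R x0) < s * dl / 2" using nvs closeabs True unfolding v_def by simp
    hence "p \<in> Qset D M t" using good_in_Q[OF plat ua[unfolded a_def] x0 True dl vD] by simp
    thus ?thesis by blast
  next
    case False
    have sneg: "- s > 0" using False s78 mu by (cases "s = 0") auto
    have nlat: "- p \<in> lattice M"
    proof -
      have "- p = (- m) v* M" unfolding p_def using scaleR_vector_matrix_assoc[of "-1" m M] by simp
      moreover have "int_vec (- m)" using m(1) unfolding int_vec_def by simp
      ultimately show ?thesis unfolding lattice_def by blast
    qed
    have "norm (vpart (- p) - (- s) *\<^sub>R x0) = norm (v - s *\<^sub>R x0)"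
      unfolding vpart_neg v_def by (metis minus_diff_eq norm_minus_cancel scaleR_minus_left diff_minus_eq_add uminus_add_conv_diff)
    hence "norm (vpart (- p) - (- s) *\<^sub>R x0) < (- s) * dl / 2" using nvs closeabs False by simp
    moreover have "\<bar>upart (- p)\<bar> < min t (1 - t)" using ua unfolding upart_neg a_def by simp
    ultimately have "- p \<in> Qset D M t" using good_in_Q[OF nlat _ x0 sneg dl vD] by simp
    thus ?thesis by blast
  qed
qed

theorem proposition2p1:
  fixes D :: "(real ^ 'n::finite) set"
  assumes d2: "CARD('n) \<ge> 2"
    and Dsph: "D \<subseteq> sphere 0 1"
    and Dint: "\<exists>U. openin (top_of_set (sphere (0::real^'n) 1)) U \<and> U \<noteq> {} \<and> U \<subseteq> D"
  shows "\<forall>(M :: real ^ ('n option) ^ ('n option)) t. det M = 1 \<and> 0 < t \<and> t < 1 \<longrightarrow>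
           Qset D M t \<noteq> {}
         \<and> (\<exists>w\<in>Qset D M t. norm (vpart w) = Ffun D M t
               \<and> (\<forall>w'\<in>Qset D M t. norm (vpart w) \<le> norm (vpart w')))
         \<and> Ffun D M t > 0
         \<and> (\<forall>\<gamma>. det \<gamma> = 1 \<and> int_mat \<gamma> \<longrightarrow> Ffun D (\<gamma> ** M) t = Ffun D M t)"
proof (intro allI impI)
  fix M :: "real ^ ('n option) ^ ('n option)" and t :: real
  assume Mt: "det M = 1 \<and> 0 < t \<and> t < 1"
  hence M: "det M \<noteq> 0" and t: "0 < t" "t < 1" by auto
  obtain U where U: "openin (top_of_set (sphere (0::real^'n) 1)) U" "U \<noteq> {}" "U \<subseteq> D"
    using Dint by blast
  obtain x0 where x0U: "x0 \<in> U" using U(2) by blast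
  obtain e where e: "e > 0" "\<forall>x'\<in>sphere 0 1. dist x' x0 < e \<longrightarrow> x' \<in> U"
    using U(1) x0U unfolding openin_euclidean_subtopology_iff by blast
  define dl where "dl = min e 1"
  have dl: "dl > 0" "dl \<le> 1" unfolding dl_def using e by auto
  have vD: "\<forall>y\<in>sphere 0 1. dist y x0 < dl \<longrightarrow> y \<in> D" using e U(3) unfolding dl_def by auto
  have x0: "norm x0 = 1" using x0U U(1) openin_imp_subset by fastforce
  have Qne: "Qset D M t \<noteq> {}" by (rule Q_nonempty[OF M t x0 dl vD])
  then obtain w0 where w0: "w0 \<in> Qset D M t" by blast
  define S where "S = {w \<in> Qset D M t. norm (vpart w) \<le> norm (vpart w0)}"
  have "S \<subseteq> {w \<in> lattice M. norm w \<le> 1 + norm (vpart w0)}"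
  proof
    fix w assume "w \<in> S"
    hence w: "w \<in> lattice M" "- t < upart w" "upart w < 1 - t" "norm (vpart w) \<le> norm (vpart w0)"
      unfolding S_def Qset_def by auto
    have "norm w \<le> \<bar>upart w\<bar> + norm (vpart w)" by (rule norm_uv)
    also have "\<dots> \<le> 1 + norm (vpart w0)" using w t by linarith
    finally show "w \<in> {w \<in> lattice M. norm w \<le> 1 + norm (vpart w0)}" using w by simp
  qed
  hence finS: "finite S" using finite_lattice_ball[OF M] finite_subset by blast
  have w0S: "w0 \<in> S" unfolding S_def using w0 by simp
  define r where "r = Min ((\<lambda>w. norm (vpart w)) ` S)"
  have "r \<in> (\<lambda>w. norm (vpart w)) ` S" unfolding r_def using finS w0S by (intro Min_in) auto
  then obtain w where wS: "w \<in> S" and wr: "norm (vpart w) = r" by blast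
  have wQ: "w \<in> Qset D M t" using wS unfolding S_def by simp
  have wmin: "\<forall>w'\<in>Qset D M t. norm (vpart w) \<le> norm (vpart w')"
  proof
    fix w' assume w': "w' \<in> Qset D M t"
    show "norm (vpart w) \<le> norm (vpart w')"
    proof (cases "w' \<in> S")
      case True thus ?thesis unfolding wr r_def using finS by simp
    next
      case False
      hence "norm (vpart w') > norm (vpart w0)" using w' unfolding S_def by auto
      moreover have "r \<le> norm (vpart w0)" unfolding r_def using finS w0S by simp
      ultimately show ?thesis using wr by simp
    qed
  qed
  have Feq: "Ffun D M t = norm (vpart w)"
    unfolding Ffun_def by (rule cInf_eq_minimum) (use wQ wmin in auto)
  have Fpos: "Ffun D M t > 0"
  proof -
    obtain c x where cx: "vpart w = c *\<^sub>R x" "c > 0" "x \<in> D" using wQ unfolding Qset_def by auto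
    have "norm x = 1" using cx(3) Dsph by auto
    thus ?thesis using Feq cx by simp
  qed
  have inv: "\<forall>\<gamma>. det \<gamma> = 1 \<and> int_mat \<gamma> \<longrightarrow> Ffun D (\<gamma> ** M) t = Ffun D M t"
  proof (intro allI impI)
    fix g :: "real ^ ('n option) ^ ('n option)" assume "det g = 1 \<and> int_mat g"
    hence "lattice (g ** M) = lattice M" using lattice_mult by blast
    thus "Ffun D (g ** M) t = Ffun D M t" unfolding Ffun_def Qset_def by simp
  qed
  show "Qset D M t \<noteq> {}
         \<and> (\<exists>w\<in>Qset D M t. norm (vpart w) = Ffun D M t
               \<and> (\<forall>w'\<in>Qset D M t. norm (vpart w) \<le> norm (vpart w')))
         \<and> Ffun D M t > 0
         \<and> (\<forall>\<gamma>. det \<gamma> = 1 \<and> int_mat \<gamma> \<longrightarrow> Ffun D (\<gamma> ** M) t = Ffun D M t)"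
    using Qne wQ Feq wmin Fpos inv by auto
qed

end
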